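(* Let $N$ and $L$ be positive integers. A perfect star path of length $N$ with constant edge length $L$ exists if and only if $L$ and $N$ are coprime, $2\le L<N/2$, and $N\ge 5$.
   Context: A path of length $N$ is a vector $p=(p_0,\dots,p_{N-1})$ whose entries are the integers $0,\dots,N-1$ in some order; indices are cyclic, $p_N=p_0$. The path differences are $d_n=p_{n+1}-p_n$, and the steps are $s_n=d_n$ if $|d_n|<N/2$; $s_n=N/2$ if $|d_n|=N/2$; $s_n=d_n-N$ if $d_n>N/2$; $s_n=d_n+N$ if $d_n<-N/2$. The edge lengths are $|s_n|$. A star path is a path with $|s_n|\neq 1$ for all $n$. A perfect star path with constant edge length $L$ is a star path with $|s_n|=L$ for all $n\in\{0,\dots,N-1\}$. *)

theory Defs
  imports Complex_Main
begin

text \<open>A path of length N: entries p 0, ..., p (N-1) are 0..N-1 in some order;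
  indices are taken cyclically (p N = p 0).\<close>
definition is_path :: "nat \<Rightarrow> (nat \<Rightarrow> nat) \<Rightarrow> bool" where
  "is_path N p \<longleftrightarrow> bij_betw p {..<N} {..<N}"

definition path_diff :: "nat \<Rightarrow> (nat \<Rightarrow> nat) \<Rightarrow> nat \<Rightarrow> int" where
  "path_diff N p n = int (p (Suc n mod N)) - int (p n)"

definition step_of :: "nat \<Rightarrow> int \<Rightarrow> real" where
  "step_of N d =
     (if real_of_int \<bar>d\<bar> < real N / 2 then real_of_int d
      else if real_of_int \<bar>d\<bar> = real N / 2 then real N / 2
      else if real_of_int d > real N / 2 then real_of_int d - real N
      else real_of_int d + real N)"

definition path_step :: "nat \<Rightarrow> (nat \<Rightarrow> nat) \<Rightarrow> nat \<Rightarrow> real" where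
  "path_step N p n = step_of N (path_diff N p n)"

definition star_path :: "nat \<Rightarrow> (nat \<Rightarrow> nat) \<Rightarrow> bool" where
  "star_path N p \<longleftrightarrow> is_path N p \<and> (\<forall>n<N. \<bar>path_step N p n\<bar> \<noteq> 1)"

definition perfect_star_path :: "nat \<Rightarrow> nat \<Rightarrow> (nat \<Rightarrow> nat) \<Rightarrow> bool" where
  "perfect_star_path N L p \<longleftrightarrow> star_path N p \<and> (\<forall>n<N. \<bar>path_step N p n\<bar> = real L)"

end

theory Submission
  imports Defs
begin

lemma step_char:
  assumes "\<bar>d\<bar> < int N" "\<bar>step_of N d\<bar> = real L"
  shows "2*L \<le> N \<and> (d = int L \<or> d = - int L \<or> d = int L - int N \<or> d = int N - int L)"
proof -
  have a: "real_of_int \<bar>d\<bar> < real N" using assms(1) by linarith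
  show ?thesis
  proof (cases "real_of_int \<bar>d\<bar> < real N / 2")
    case True
    then have "\<bar>real_of_int d\<bar> = real L" using assms(2) by (simp add: step_of_def)
    then have "\<bar>d\<bar> = int L" by linarith
    then show ?thesis using True by linarith
  next
    case F1: False
    show ?thesis
    proof (cases "real_of_int \<bar>d\<bar> = real N / 2")
      case True
      then have "real L = real N / 2" using assms(2) by (simp add: step_of_def)
      then show ?thesis using True by linarith
    next
      case F2: False
      show ?thesis
      proof (cases "real_of_int d > real N / 2")
        case True
        then have "\<bar>real_of_int d - real N\<bar> = real L" using assms(2) F1 F2 by (simp add: step_of_def)
        then show ?thesis using True a by linarith
      next
        case False
        have "step_of N d = real_of_int d + real N" unfolding step_of_def
          by (subst if_not_P[OF F1], subst if_not_P[OF F2], subst if_not_P[OF False]) (rule refl)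
        then have "\<bar>real_of_int d + real N\<bar> = real L" using assms(2) by simp
        then show ?thesis using False F1 F2 a by linarith
      qed
    qed
  qed
qed

lemma forward:
  assumes N: "N > 0" and L: "L > 0" and P: "perfect_star_path N L p"
  shows "coprime L N \<and> 2 \<le> L \<and> real L < real N / 2 \<and> N \<ge> 5"
proof -
  have bij: "bij_betw p {..<N} {..<N}" using P by (simp add: perfect_star_path_def star_path_def is_path_def)
  have st: "\<And>n. n < N \<Longrightarrow> \<bar>path_step N p n\<bar> = real L" using P by (simp add: perfect_star_path_def)
  have ne1: "L \<noteq> 1" using P N by (auto simp: perfect_star_path_def star_path_def)
  have lt: "\<And>n. n < N \<Longrightarrow> p n < N" using bij by (auto simp: bij_betw_def)
  define g where "g = int (gcd L N)"
  have ch: "2*L \<le> N \<and> (path_diff N p n = int L \<or> path_diff N p n = - int L \<or> path_diff N p n = int L - int N \<or> path_diff N p n = int N - int L)"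
    if "n < N" for n
  proof (rule step_char)
    have "p (Suc n mod N) < N" using lt N by simp
    moreover have "p n < N" using lt that by simp
    ultimately show "\<bar>path_diff N p n\<bar> < int N" by (simp add: path_diff_def)
    show "\<bar>step_of N (path_diff N p n)\<bar> = real L" using st[OF that] by (simp add: path_step_def)
  qed
  have gL: "g dvd int L" and gN: "g dvd int N" unfolding g_def by (simp_all add: int_dvd_int_iff)
  have gd: "g dvd path_diff N p n" if "n < N" for n
    using ch[OF that] gL gN by auto
  have ind: "k < N \<Longrightarrow> g dvd int (p k) - int (p 0)" for k
  proof (induction k)
    case 0 then show ?case by simp
  next
    case (Suc k)
    have "g dvd path_diff N p k" using gd Suc by simp
    then have "g dvd int (p (Suc k)) - int (p k)" using Suc by (simp add: path_diff_def)
    with Suc show ?case using dvd_add by fastforce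
  qed
  have LN: "2*L \<le> N" using ch N by blast
  have N2: "N \<ge> 2" using LN L by linarith
  have "0 \<in> p ` {..<N}" "1 \<in> p ` {..<N}" using bij N2 by (auto simp: bij_betw_def)
  then obtain a b where ab: "a < N" "p a = 0" "b < N" "p b = 1" by auto
  have "g dvd int (p b) - int (p a)" using ind[OF ab(1)] ind[OF ab(3)]
    using dvd_diff by fastforce
  hence "g dvd 1" using ab by simp
  hence g1: "gcd L N = 1" unfolding g_def by simp
  hence cop: "coprime L N" by (simp add: coprime_iff_gcd_eq_1)
  have "2*L \<noteq> N"
  proof
    assume "2*L = N"
    then have "gcd L N = L" using gcd_nat.absorb1 by (metis dvd_triv_right)
    then show False using g1 ne1 by simp
  qed
  then have "2*L < N" using LN by simp
  then have "real L < real N / 2" by linarith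
  moreover have "L \<ge> 2" using L ne1 by simp
  ultimately show ?thesis using cop \<open>2*L < N\<close> by auto
qed

lemma backward:
  assumes N: "N > 0" and L: "L > 0" and cop: "coprime L N" and L2: "2 \<le> L" and LN: "real L < real N / 2"
  shows "perfect_star_path N L (\<lambda>n. n * L mod N)"
proof -
  define p where "p = (\<lambda>n. n * L mod N)"
  have LN': "2 * L < N" using LN by linarith
  have inj: "inj_on p {..<N}"
  proof (rule inj_onI)
    fix a b assume a: "a \<in> {..<N}" and b: "b \<in> {..<N}" and e: "p a = p b"
    have "int (a*L) mod int N = int (b*L) mod int N" using e unfolding p_def by (metis of_nat_mod)
    then have "int N dvd (int a - int b) * int L"
      by (metis mod_eq_dvd_iff left_diff_distrib of_nat_mult)
    moreover have "coprime (int N) (int L)" using cop by (simp add: coprime_commute)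
    ultimately have "int N dvd int a - int b" by (simp add: coprime_dvd_mult_left_iff)
    then obtain k where k: "int a - int b = int N * k" by (auto simp: dvd_def)
    have "k = 0"
    proof (rule ccontr)
      assume "k \<noteq> 0"
      then have "\<bar>k\<bar> \<ge> 1" by linarith
      then have "\<bar>int N * k\<bar> \<ge> int N" by (simp add: abs_mult mult_le_cancel_left1)
      then show False using k a b by auto
    qed
    then show "a = b" using k by simp
  qed
  have sub: "p ` {..<N} \<subseteq> {..<N}" using N by (auto simp: p_def)
  have bij: "bij_betw p {..<N} {..<N}"
    unfolding bij_betw_def using inj endo_inj_surj[OF _ sub inj] by simp
  have d: "path_diff N p n = int L \<or> path_diff N p n = int L - int N" if "n < N" for n
  proof -
    have e1: "int (p (Suc n mod N)) = int (Suc n) * int L mod int N"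
      unfolding p_def by (metis mod_mult_left_eq of_nat_mod of_nat_mult)
    have e2: "int (p n) = int n * int L mod int N" unfolding p_def by (metis of_nat_mod of_nat_mult)
    have "(int (Suc n) * int L - int n * int L) mod int N = (path_diff N p n) mod int N"
      unfolding path_diff_def e1 e2 by (simp add: mod_diff_eq)
    then have "int L mod int N = path_diff N p n mod int N" by (simp add: algebra_simps)
    then have "int N dvd path_diff N p n - int L" by (metis mod_eq_dvd_iff)
    then obtain k where k: "path_diff N p n - int L = int N * k" by (auto simp: dvd_def)
    have b1: "p (Suc n mod N) < N" "p n < N" using N by (auto simp: p_def)
    have "k = 0 \<or> k = -1"
    proof (rule ccontr)
      assume "\<not> (k = 0 \<or> k = -1)"
      then have "k \<ge> 1 \<or> k \<le> -2" by auto
      then have "int N * k \<ge> int N \<or> int N * k \<le> -2 * int N"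
      proof
        assume "k \<ge> 1" then show ?thesis by (simp add: mult_le_cancel_left1)
      next
        assume "k \<le> -2" then have "int N * k \<le> int N * (-2)" using mult_left_mono[of k "-2" "int N"] by simp
        then show ?thesis by simp
      qed
      moreover have "path_diff N p n = int (p (Suc n mod N)) - int (p n)" by (simp add: path_diff_def)
      ultimately show False using k b1 LN' by linarith
    qed
    then show ?thesis using k by auto
  qed
  have s: "\<bar>path_step N p n\<bar> = real L" if "n < N" for n
  proof -
    from d[OF that] show ?thesis
    proof
      assume h: "path_diff N p n = int L"
      then show ?thesis using LN by (simp add: path_step_def step_of_def)
    next
      assume h: "path_diff N p n = int L - int N"
      have c1: "\<not> real_of_int \<bar>int L - int N\<bar> < real N / 2" using LN LN' by auto
      have c2: "\<not> real_of_int \<bar>int L - int N\<bar> = real N / 2" using LN LN' by auto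
      have c3: "\<not> real_of_int (int L - int N) > real N / 2" using LN LN' by auto
      have "step_of N (int L - int N) = real_of_int (int L - int N) + real N" unfolding step_of_def
        by (subst if_not_P[OF c1], subst if_not_P[OF c2], subst if_not_P[OF c3]) (rule refl)
      then show ?thesis using h by (simp add: path_step_def)
    qed
  qed
  show ?thesis unfolding perfect_star_path_def star_path_def is_path_def
    using bij s L2 unfolding p_def by auto
qed

theorem mainTheorem8:
  fixes N L :: nat
  assumes "N > 0" and "L > 0"
  shows "(\<exists>p. perfect_star_path N L p) \<longleftrightarrow>
           coprime L N \<and> 2 \<le> L \<and> real L < real N / 2 \<and> N \<ge> 5"
  using forward[OF assms] backward[OF assms] by blast

end
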